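(* Let $k\geq 3$, $\chi\geq 2$, $t\geq k-1$ and $n\geq 3(k-1)$ be integers with $n\equiv 1\pmod{k-1}$. Let $H$ be the $k$-graph on vertex set $A_1\sqcup\dots\sqcup A_\chi$, where $|A_i|>(\chi-1)(k-2)+\tau(k-1,t)$ for all $i\in[\chi-1]$ and $|A_\chi|=t$, whose edges are all $k$-subsets $e$ of the vertex set such that $|e\cap A_i|=k-1$ for some $i\in[\chi]$. Then $R(P^{(k)}_{n,1},H)\geq (\chi-1)(n-1)+\tau(k-1,t)-2k+3$.
   Context: A $k$-graph is a $k$-uniform hypergraph. $R(G,H)$ is the least $N$ such that every red/blue colouring of the edges of $K^{(k)}_N$ contains a red copy of $G$ or a blue copy of $H$. The loose path $P^{(k)}_{n,1}$ ($n=q(k-1)+1$) has vertices $v_1,\dots,v_n$ and edges $\{v_{(i-1)(k-1)+1},\dots,v_{i(k-1)+1}\}$, $i\in[q]$. For integers $j,\alpha\ge1$, $\tau(j,\alpha)$ is the largest $N$ such that some $j$-uniform hypergraph on $N$ vertices has independence number less than $\alpha$ and no two edges meeting in exactly one vertex. *)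

theory Defs
  imports Main
begin

definition has_copy :: "'a set \<Rightarrow> 'a set set \<Rightarrow> 'b set \<Rightarrow> 'b set set \<Rightarrow> bool" where
  "has_copy VG EG W F \<longleftrightarrow>
     (\<exists>f. inj_on f VG \<and> f ` VG \<subseteq> W \<and> (\<forall>e\<in>EG. f ` e \<in> F))"

definition complete_kgraph_edges :: "nat \<Rightarrow> nat \<Rightarrow> nat set set" where
  "complete_kgraph_edges k N = {e. e \<subseteq> {0..<N} \<and> card e = k}"

definition ramsey_number :: "nat \<Rightarrow> 'a set \<Rightarrow> 'a set set \<Rightarrow> 'b set \<Rightarrow> 'b set set \<Rightarrow> nat" where
  "ramsey_number k VG EG VH EH =
     (LEAST N. \<forall>c :: nat set \<Rightarrow> bool.
        has_copy VG EG {0..<N} {e \<in> complete_kgraph_edges k N. c e} \<or>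
        has_copy VH EH {0..<N} {e \<in> complete_kgraph_edges k N. \<not> c e})"

text \<open>Loose path P^(k)_{n,1} with vertices 1..n, n = q(k-1)+1.\<close>
definition loose_path_vertices :: "nat \<Rightarrow> nat set" where
  "loose_path_vertices n = {1..n}"

definition loose_path_edges :: "nat \<Rightarrow> nat \<Rightarrow> nat set set" where
  "loose_path_edges k n =
     (\<lambda>i. {(i - 1) * (k - 1) + 1 .. i * (k - 1) + 1}) ` {1 .. (n - 1) div (k - 1)}"

definition tau :: "nat \<Rightarrow> nat \<Rightarrow> nat" where
  "tau j \<alpha> = (GREATEST N. \<exists>E :: nat set set.
      E \<subseteq> {e. e \<subseteq> {0..<N} \<and> card e = j} \<and>
      (\<forall>I. I \<subseteq> {0..<N} \<and> (\<forall>e\<in>E. \<not> e \<subseteq> I) \<longrightarrow> card I < \<alpha>) \<and>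
      (\<forall>e\<in>E. \<forall>e'\<in>E. e \<noteq> e' \<longrightarrow> card (e \<inter> e') \<noteq> 1))"

end

theory Submission
  imports Defs "HOL-Library.Ramsey"
begin

lemma ramsey2col:
  "\<exists>N::nat. \<forall>c::nat set \<Rightarrow> bool. \<exists>H. H \<subseteq> {0..<N} \<and>
     ((card H = a \<and> (\<forall>e. e \<subseteq> H \<and> card e = r \<longrightarrow> c e)) \<or>
      (card H = b \<and> (\<forall>e. e \<subseteq> H \<and> card e = r \<longrightarrow> \<not> c e)))"
proof -
  obtain N::nat where N: "partn_lst {..<N} [a,b] r" using ramsey_full by blast
  show ?thesis
  proof (intro exI[of _ N] allI)
    fix c :: "nat set \<Rightarrow> bool"
    define f where "f = (\<lambda>e. if c e then 0 else (1::nat))"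
    have "f \<in> nsets {..<N} r \<rightarrow> {..<length [a,b]}" by (auto simp: f_def)
    from partn_lstE[OF N this refl] obtain i H where i: "i < length [a,b]"
      and H: "H \<in> nsets {..<N} ([a,b]!i)" and sub: "f ` (nsets H r) \<subseteq> {i}" by blast
    have Hs: "H \<subseteq> {0..<N}" and Hf: "finite H" and Hc: "card H = [a,b]!i"
      using H by (auto simp: nsets_def)
    have fe: "f e = i" if "e \<subseteq> H" "card e = r" for e
    proof -
      have "finite e" using that Hf finite_subset by blast
      then have "e \<in> nsets H r" using that by (auto simp: nsets_def)
      then show ?thesis using sub by blast
    qed
    show "\<exists>H. H \<subseteq> {0..<N} \<and>
     ((card H = a \<and> (\<forall>e. e \<subseteq> H \<and> card e = r \<longrightarrow> c e)) \<or>
      (card H = b \<and> (\<forall>e. e \<subseteq> H \<and> card e = r \<longrightarrow> \<not> c e)))"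
    proof (cases "i = 0")
      case True
      have "card H = a" using Hc True by simp
      moreover have "\<forall>e. e \<subseteq> H \<and> card e = r \<longrightarrow> c e"
        using fe True unfolding f_def by (metis zero_neq_one)
      ultimately show ?thesis using Hs by blast
    next
      case False
      then have i1: "i = 1" using i by auto
      have "card H = b" using Hc i1 by simp
      moreover have "\<forall>e. e \<subseteq> H \<and> card e = r \<longrightarrow> \<not> c e"
        using fe i1 unfolding f_def by (metis zero_neq_one)
      ultimately show ?thesis using Hs by blast
    qed
  qed
qed

lemma tau_props:
  assumes j: "j \<ge> 2" and al: "\<alpha> \<ge> 1"
  shows "\<exists>E :: nat set set.
      E \<subseteq> {e. e \<subseteq> {0..<tau j \<alpha>} \<and> card e = j} \<and>
      (\<forall>I. I \<subseteq> {0..<tau j \<alpha>} \<and> (\<forall>e\<in>E. \<not> e \<subseteq> I) \<longrightarrow> card I < \<alpha>) \<and>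
      (\<forall>e\<in>E. \<forall>e'\<in>E. e \<noteq> e' \<longrightarrow> card (e \<inter> e') \<noteq> 1)"
proof -
  define P where "P = (\<lambda>N. \<exists>E :: nat set set.
      E \<subseteq> {e. e \<subseteq> {0..<N} \<and> card e = j} \<and>
      (\<forall>I. I \<subseteq> {0..<N} \<and> (\<forall>e\<in>E. \<not> e \<subseteq> I) \<longrightarrow> card I < \<alpha>) \<and>
      (\<forall>e\<in>E. \<forall>e'\<in>E. e \<noteq> e' \<longrightarrow> card (e \<inter> e') \<noteq> 1))"
  have P0: "P 0" unfolding P_def using al by (intro exI[of _ "{}"]) auto
  obtain R where R: "\<forall>c::nat set \<Rightarrow> bool. \<exists>H. H \<subseteq> {0..<R} \<and>
     ((card H = 2*j-1 \<and> (\<forall>e. e \<subseteq> H \<and> card e = j \<longrightarrow> c e)) \<or>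
      (card H = \<alpha> \<and> (\<forall>e. e \<subseteq> H \<and> card e = j \<longrightarrow> \<not> c e)))"
    using ramsey2col[where a="2*j-1" and r=j and b=\<alpha>] by blast
  have bound: "N < R" if "P N" for N
  proof (rule ccontr)
    assume "\<not> N < R"
    from that obtain E where E1: "E \<subseteq> {e. e \<subseteq> {0..<N} \<and> card e = j}"
      and E2: "\<forall>I. I \<subseteq> {0..<N} \<and> (\<forall>e\<in>E. \<not> e \<subseteq> I) \<longrightarrow> card I < \<alpha>"
      and E3: "\<forall>e\<in>E. \<forall>e'\<in>E. e \<noteq> e' \<longrightarrow> card (e \<inter> e') \<noteq> 1"
      unfolding P_def by blast
    from spec[OF R, of "\<lambda>e. e \<in> E"] obtain H where HR: "H \<subseteq> {0..<R}" and
      HH: "(card H = 2*j-1 \<and> (\<forall>e. e \<subseteq> H \<and> card e = j \<longrightarrow> e \<in> E)) \<or>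
      (card H = \<alpha> \<and> (\<forall>e. e \<subseteq> H \<and> card e = j \<longrightarrow> e \<notin> E))"
      by blast
    have HN: "H \<subseteq> {0..<N}" using HR \<open>\<not> N < R\<close> by auto
    have Hf: "finite H" using finite_subset[OF HR] by simp
    show False
    proof (cases "card H = 2*j-1 \<and> (\<forall>e. e \<subseteq> H \<and> card e = j \<longrightarrow> e \<in> E)")
      case True
      then have cH: "card H = 2*j-1" and cl: "\<forall>e. e \<subseteq> H \<and> card e = j \<longrightarrow> e \<in> E" by auto
      then have "H \<noteq> {}" using j by auto
      then obtain x where x: "x \<in> H" by blast
      have c1: "card (H - {x}) = 2*j-2" using cH x Hf by (simp add: card_Diff_singleton)
      obtain B1 where B1: "B1 \<subseteq> H - {x}" "card B1 = j - 1"
      proof -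
        have "j - 1 \<le> card (H - {x})" using c1 j by simp
        from obtain_subset_with_card_n[OF this] show ?thesis using that by blast
      qed
      define B2 where "B2 = H - {x} - B1"
      have fB1: "finite B1" using B1 Hf finite_subset by blast
      have cB2: "card B2 = j - 1" unfolding B2_def using B1(1) c1 j
        by (simp add: card_Diff_subset[OF fB1 B1(1)] B1(2))
      have fB2: "finite B2" unfolding B2_def using Hf by simp
      define e1 where "e1 = insert x B1"
      define e2 where "e2 = insert x B2"
      have xB1: "x \<notin> B1" using B1 by blast
      have xB2: "x \<notin> B2" unfolding B2_def by blast
      have ce1: "card e1 = j" unfolding e1_def using B1(2) fB1 j xB1 by simp
      have ce2: "card e2 = j" unfolding e2_def using cB2 fB2 j xB2 by simp
      have "e1 \<subseteq> H" using B1(1) x unfolding e1_def by blast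
      then have e1E: "e1 \<in> E" using cl ce1 by blast
      have "e2 \<subseteq> H" using x unfolding e2_def B2_def by blast
      then have e2E: "e2 \<in> E" using cl ce2 by blast
      have int: "e1 \<inter> e2 = {x}" unfolding e1_def e2_def B2_def by blast
      have ne: "e1 \<noteq> e2" using int ce1 j by auto
      have "card (e1 \<inter> e2) = 1" using int by simp
      then show False using E3 e1E e2E ne by blast
    next
      case False
      then have cH: "card H = \<alpha>" and cl: "\<forall>e. e \<subseteq> H \<and> card e = j \<longrightarrow> e \<notin> E" using HH by auto
      have "\<forall>e\<in>E. \<not> e \<subseteq> H" using cl E1 by blast
      then have "card H < \<alpha>" using E2 HN by blast
      then show False using cH by simp
    qed
  qed
  have "P (Greatest P)"
  proof (rule GreatestI_nat[of P 0 R])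
    show "P 0" by (rule P0)
    show "\<And>y. P y \<Longrightarrow> y \<le> R" using bound less_imp_le by blast
  qed
  then show ?thesis unfolding P_def tau_def by blast
qed

lemma has_copy_mono:
  assumes "has_copy V E W F" "W \<subseteq> W'" "F \<subseteq> F'"
  shows "has_copy V E W' F'"
proof -
  obtain f where f: "inj_on f V" "f ` V \<subseteq> W" "\<forall>e\<in>E. f ` e \<in> F"
    using assms(1) unfolding has_copy_def by blast
  have "f ` V \<subseteq> W'" using f(2) assms(2) by (rule subset_trans)
  moreover have "\<forall>e\<in>E. f ` e \<in> F'" using f(3) assms(3) by blast
  ultimately show ?thesis unfolding has_copy_def using f(1) by blast
qed
lemma complete_mono: "N \<le> N' \<Longrightarrow> complete_kgraph_edges k N \<subseteq> complete_kgraph_edges k N'"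
  unfolding complete_kgraph_edges_def by auto
lemma copy_in_clique:
  fixes V :: "'a set" and H :: "nat set"
  assumes fV: "finite V" and EV: "\<forall>e\<in>E. e \<subseteq> V \<and> card e = k"
    and HN: "H \<subseteq> {0..<N}" and cH: "card H = card V"
    and P: "\<forall>e. e \<subseteq> H \<and> card e = k \<longrightarrow> P e"
  shows "has_copy V E {0..<N} {e \<in> complete_kgraph_edges k N. P e}"
proof -
  have fH: "finite H" using finite_subset[OF HN] by simp
  obtain f where f: "bij_betw f V H" using finite_same_card_bij[OF fV fH] cH by metis
  have inj: "inj_on f V" and im: "f ` V = H" using f unfolding bij_betw_def by simp_all
  have "f ` e \<in> {e \<in> complete_kgraph_edges k N. P e}" if e: "e \<in> E" for e
  proof -
    have sub: "e \<subseteq> V" and ce: "card e = k" using EV e by auto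
    have c2: "card (f ` e) = k" using card_image[OF inj_on_subset[OF inj sub]] ce by simp
    have s2: "f ` e \<subseteq> H" using sub im by blast
    then have "f ` e \<subseteq> {0..<N}" using HN by blast
    then show ?thesis using c2 s2 P unfolding complete_kgraph_edges_def by blast
  qed
  then have "\<forall>e\<in>E. f ` e \<in> {e \<in> complete_kgraph_edges k N. P e}" by blast
  moreover have "f ` V \<subseteq> {0..<N}" using im HN by simp
  ultimately show ?thesis unfolding has_copy_def using inj by blast
qed

lemma path_edges_props:
  assumes k: "k \<ge> 2" and e: "e \<in> loose_path_edges k n"
  shows "e \<subseteq> {1..n} \<and> card e = k"
proof -
  obtain i where i: "i \<in> {1..(n-1) div (k-1)}" and e_eq: "e = {(i - 1) * (k - 1) + 1 .. i * (k - 1) + 1}"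
    using e unfolding loose_path_edges_def by blast
  have "i * (k-1) \<le> ((n-1) div (k-1)) * (k-1)" using i by simp
  also have "\<dots> \<le> n - 1" by (rule div_times_less_eq_dividend)
  finally have le: "i * (k-1) \<le> n - 1" .
  obtain j where j: "i = Suc j" using i by (cases i) auto
  have n1: "n \<ge> 1"
  proof (rule ccontr)
    assume "\<not> n \<ge> 1"
    then have "n = 0" by simp
    then show False using i by simp
  qed
  have hi: "i * (k - 1) + 1 \<le> n" using le n1 by linarith
  have s: "e \<subseteq> {1..n}" unfolding e_eq using hi by (intro subsetI) simp
  have "card e = Suc (i * (k - 1) + 1) - ((i - 1) * (k - 1) + 1)" using e_eq by simp
  also have "\<dots> = k"
  proof -
    obtain m where m: "k = Suc m" using k by (cases k) auto
    show ?thesis unfolding m j by simp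
  qed
  finally show ?thesis using s by simp
qed

lemma ramsey_exists:
  fixes VH :: "'a set"
  assumes k: "k \<ge> 2" and fVH: "finite VH" and EH: "\<forall>e\<in>EH. e \<subseteq> VH \<and> card e = k"
  shows "\<exists>N. \<forall>c :: nat set \<Rightarrow> bool.
        has_copy (loose_path_vertices n) (loose_path_edges k n) {0..<N} {e \<in> complete_kgraph_edges k N. c e} \<or>
        has_copy VH EH {0..<N} {e \<in> complete_kgraph_edges k N. \<not> c e}"
proof -
  obtain N where N: "\<forall>c::nat set \<Rightarrow> bool. \<exists>H. H \<subseteq> {0..<N} \<and>
     ((card H = card (loose_path_vertices n) \<and> (\<forall>e. e \<subseteq> H \<and> card e = k \<longrightarrow> c e)) \<or>
      (card H = card VH \<and> (\<forall>e. e \<subseteq> H \<and> card e = k \<longrightarrow> \<not> c e)))"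
    using ramsey2col[where a="card (loose_path_vertices n)" and r=k and b="card VH"] by blast
  have EP: "\<forall>e\<in>loose_path_edges k n. e \<subseteq> loose_path_vertices n \<and> card e = k"
    using path_edges_props[OF k] unfolding loose_path_vertices_def by blast
  have fP: "finite (loose_path_vertices n)" unfolding loose_path_vertices_def by simp
  show ?thesis
  proof (intro exI[of _ N] allI)
    fix c :: "nat set \<Rightarrow> bool"
    from spec[OF N, of c] obtain H where HN: "H \<subseteq> {0..<N}" and
      HH: "(card H = card (loose_path_vertices n) \<and> (\<forall>e. e \<subseteq> H \<and> card e = k \<longrightarrow> c e)) \<or>
      (card H = card VH \<and> (\<forall>e. e \<subseteq> H \<and> card e = k \<longrightarrow> \<not> c e))" by blast
    from HH show "has_copy (loose_path_vertices n) (loose_path_edges k n) {0..<N} {e \<in> complete_kgraph_edges k N. c e} \<or>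
        has_copy VH EH {0..<N} {e \<in> complete_kgraph_edges k N. \<not> c e}"
    proof
      assume h: "card H = card (loose_path_vertices n) \<and> (\<forall>e. e \<subseteq> H \<and> card e = k \<longrightarrow> c e)"
      show ?thesis
      proof (rule disjI1, rule copy_in_clique[OF fP EP HN])
        show "card H = card (loose_path_vertices n)" using h by blast
        show "\<forall>e. e \<subseteq> H \<and> card e = k \<longrightarrow> c e" using h by blast
      qed
    next
      assume h: "card H = card VH \<and> (\<forall>e. e \<subseteq> H \<and> card e = k \<longrightarrow> \<not> c e)"
      show ?thesis
      proof (rule disjI2, rule copy_in_clique[OF fVH EH HN])
        show "card H = card VH" using h by blast
        show "\<forall>e. e \<subseteq> H \<and> card e = k \<longrightarrow> \<not> c e" using h by blast
      qed
    qed
  qed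
qed

lemma no_red_path:
  fixes k n \<tau> w N :: nat and G :: "nat set set" and bl :: "nat \<Rightarrow> nat" and c :: "nat set \<Rightarrow> bool"
  assumes k: "k \<ge> 3" and n: "n \<ge> 3 * (k - 1)" and nmod: "n mod (k - 1) = 1 mod (k - 1)"
    and w: "w = n - 2 * k + 1"
    and G: "G \<subseteq> {e. e \<subseteq> {0..<\<tau>} \<and> card e = k - 1}"
    and Gint: "\<forall>e\<in>G. \<forall>e'\<in>G. e \<noteq> e' \<longrightarrow> card (e \<inter> e') \<noteq> 1"
    and bl: "bl = (\<lambda>v. if v < \<tau> then 0 else if v < \<tau> + w then 1 else 2 + (v - \<tau> - w) div (n - 1))"
    and c: "c = (\<lambda>e. (\<exists>b\<ge>1. \<forall>v\<in>e. bl v = b) \<or> (\<exists>g\<in>G. \<exists>x. bl x = 1 \<and> e = insert x g))"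
  shows "\<not> has_copy (loose_path_vertices n) (loose_path_edges k n) {0..<N}
            {e \<in> complete_kgraph_edges k N. c e}"
proof
  assume "has_copy (loose_path_vertices n) (loose_path_edges k n) {0..<N}
            {e \<in> complete_kgraph_edges k N. c e}"
  then obtain f where inj0: "inj_on f (loose_path_vertices n)" and red0: "\<forall>e\<in>loose_path_edges k n. f ` e \<in> {e \<in> complete_kgraph_edges k N. c e}"
    unfolding has_copy_def by blast
  have inj: "inj_on f {1..n}" using inj0 unfolding loose_path_vertices_def .
  define m where "m = k - 1"
  have m2: "m \<ge> 2" using k unfolding m_def by simp
  have nm: "n mod m = 1" using nmod m2 unfolding m_def by simp
  have ndec: "n = (n div m) * m + 1" using div_mult_mod_eq[of n m] nm by simp
  define q where "q = (n - 1) div m"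
  have qd: "q = n div m"
  proof -
    have "n - 1 = (n div m) * m" using ndec by linarith
    then show ?thesis unfolding q_def using m2 by simp
  qed
  have nq: "n = q * m + 1" using ndec qd by simp
  have q3: "q \<ge> 3"
  proof (rule ccontr)
    assume "\<not> q \<ge> 3"
    then have "q \<le> 2" by simp
    then have "q * m \<le> 2 * m" by (rule mult_right_mono) simp
    then show False using nq n m2 unfolding m_def by linarith
  qed
  define P where "P i = {(i - 1) * m + 1 .. i * m + 1}" for i
  have Pedge: "P i \<in> loose_path_edges k n" if iq: "i \<in> {1..q}" for i
    unfolding loose_path_edges_def P_def
  proof (rule image_eqI[where x=i])
    show "{(i - 1) * m + 1..i * m + 1} = {(i - 1) * (k - 1) + 1..i * (k - 1) + 1}" unfolding m_def ..
    show "i \<in> {1..(n - 1) div (k - 1)}" using iq unfolding q_def m_def .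
  qed
  have red: "c (f ` P i)" if iq: "i \<in> {1..q}" for i
  proof -
    have "f ` P i \<in> {e \<in> complete_kgraph_edges k N. c e}" using red0 Pedge[OF iq] by (rule bspec)
    then show ?thesis by simp
  qed
  have Psub: "P i \<subseteq> {1..n}" if "i \<in> {1..q}" for i
    using path_edges_props[OF _ Pedge[OF that]] k by simp
  have Pint: "P i \<inter> P (Suc i) = {i * m + 1}" if i1: "i \<ge> 1" for i
  proof -
    obtain j where j: "i = Suc j" using i1 by (cases i) auto
    show ?thesis unfolding P_def j by auto
  qed
  have bl0: "bl v = 0 \<longleftrightarrow> v < \<tau>" for v unfolding bl by simp
  have Gs: "g \<subseteq> {0..<\<tau>}" "card g = k - 1" if "g \<in> G" for g using G that by auto
  define cl where "cl v = (if bl v = 0 then 1 else bl v)" for v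
  have cl_red: "cl u = cl v" if ce: "c e" and u: "u \<in> e" and v: "v \<in> e" for e u v
  proof -
    have "(\<exists>b\<ge>1. \<forall>v\<in>e. bl v = b) \<or> (\<exists>g\<in>G. \<exists>x. bl x = 1 \<and> e = insert x g)"
      using ce unfolding c by simp
    then show ?thesis
    proof
      assume "\<exists>b\<ge>1. \<forall>v\<in>e. bl v = b"
      then obtain b where "\<forall>v\<in>e. bl v = b" by blast
      then show ?thesis using u v unfolding cl_def by simp
    next
      assume "\<exists>g\<in>G. \<exists>x. bl x = 1 \<and> e = insert x g"
      then obtain g x where g: "g \<in> G" and x: "bl x = 1" and e: "e = insert x g" by blast
      have "cl y = 1" if "y \<in> e" for y
      proof (cases "y = x")
        case True then show ?thesis using x unfolding cl_def by simp
      next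
        case False
        then have "y \<in> g" using that e by simp
        then have "y < \<tau>" using Gs(1)[OF g] by auto
        then show ?thesis using bl0 unfolding cl_def by simp
      qed
      then show ?thesis using u v by simp
    qed
  qed
  have adj: "\<exists>i\<in>{1..q}. v \<in> P i \<and> Suc v \<in> P i" if v: "v \<in> {1..<n}" for v
  proof -
    define j where "j = (v - 1) div m"
    have lo: "j * m \<le> v - 1" unfolding j_def by (rule div_times_less_eq_dividend)
    have hi: "v - 1 < j * m + m"
    proof -
      have "v - 1 = j * m + (v - 1) mod m" unfolding j_def by simp
      moreover have "(v - 1) mod m < m" using m2 by simp
      ultimately show ?thesis by linarith
    qed
    have "v - 1 < q * m" using v nq by auto
    then have jq: "j < q" unfolding j_def using m2 by (simp add: less_mult_imp_div_less)
    have "v \<in> P (Suc j) \<and> Suc v \<in> P (Suc j)" unfolding P_def using lo hi v by auto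
    moreover have "Suc j \<in> {1..q}" using jq by simp
    ultimately show ?thesis by blast
  qed
  have clconst: "v \<in> {1..n} \<Longrightarrow> cl (f v) = cl (f 1)" for v
  proof (induction v)
    case 0 then show ?case by simp
  next
    case (Suc v)
    show ?case
    proof (cases "v = 0")
      case True then show ?thesis by simp
    next
      case False
      then have vr: "v \<in> {1..<n}" using Suc.prems by auto
      then have IH: "cl (f v) = cl (f 1)" using Suc.IH by simp
      obtain i where i: "i \<in> {1..q}" and vi: "v \<in> P i" and svi: "Suc v \<in> P i" using adj[OF vr] by blast
      have "cl (f (Suc v)) = cl (f v)"
        using cl_red[OF red[OF i]] vi svi by blast
      then show ?thesis using IH by simp
    qed
  qed
  have fin_inj: "card (f ` S) = card S" if "S \<subseteq> {1..n}" for S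
    using card_image[OF inj_on_subset[OF inj that]] .
  have n1: "n \<ge> 1" using nq by simp
  show False
  proof (cases "cl (f 1) \<ge> 2")
    case True
    define b where "b = cl (f 1)"
    have allb: "bl (f v) = b" if "v \<in> {1..n}" for v
      using clconst[OF that] True unfolding b_def cl_def by (auto split: if_splits)
    define lo where "lo = \<tau> + w + (b - 2) * (n - 1)"
    have inblk: "f v \<in> {lo..<lo + (n - 1)}" if "v \<in> {1..n}" for v
    proof -
      have bv: "bl (f v) = b" using allb[OF that] .
      have ge: "\<not> f v < \<tau> + w" using bv True unfolding bl b_def by (auto split: if_splits)
      define r where "r = f v - \<tau> - w"
      have rd: "r div (n - 1) = b - 2" using bv ge unfolding bl r_def by (auto split: if_splits)
      have r1: "(b - 2) * (n - 1) \<le> r"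
      proof -
        have "r div (n - 1) * (n - 1) \<le> r" by (rule div_times_less_eq_dividend)
        from this[unfolded rd] show ?thesis .
      qed
      have r2: "r < (b - 2) * (n - 1) + (n - 1)"
      proof -
        have e1: "(b - 2) * (n - 1) + r mod (n - 1) = r" using div_mult_mod_eq[of r "n - 1"] rd by simp
        moreover have "r mod (n - 1) < n - 1" using n m2 unfolding m_def by simp
        ultimately show ?thesis by linarith
      qed
      show ?thesis using r1 r2 ge nq unfolding lo_def r_def by auto
    qed
    have "f ` {1..n} \<subseteq> {lo..<lo + (n - 1)}" using inblk by blast
    then have "card (f ` {1..n}) \<le> card {lo..<lo + (n - 1)}" by (intro card_mono) auto
    then have "card (f ` {1..n}) \<le> n - 1" by simp
    then show False using fin_inj[of "{1..n}"] n1 by simp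
  next
    case False
    have cl1: "cl v \<ge> 1" for v unfolding cl_def by simp
    then have c1: "cl (f 1) = 1" using False cl1[of "f 1"] by linarith
    have blW: "bl (f v) \<le> 1" if vn: "v \<in> {1..n}" for v
    proof -
      have "cl (f v) = 1" using clconst[OF vn] c1 by simp
      then show ?thesis unfolding cl_def by (cases "bl (f v) = 0") simp_all
    qed
    define Ts where "Ts = {v \<in> {1..n}. f v < \<tau>}"
    define Ws where "Ws = {v \<in> {1..n}. \<not> f v < \<tau>}"
    have Wsub: "f ` Ws \<subseteq> {\<tau>..<\<tau> + w}"
    proof
      fix y assume "y \<in> f ` Ws"
      then obtain v where v: "v \<in> Ws" and y: "y = f v" by blast
      have "bl (f v) \<le> 1" using blW v unfolding Ws_def by blast
      then show "y \<in> {\<tau>..<\<tau> + w}" using v y unfolding Ws_def bl by (auto split: if_splits)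
    qed
    have cW: "card Ws \<le> w"
    proof -
      have "card (f ` Ws) \<le> card {\<tau>..<\<tau> + w}" using Wsub by (intro card_mono) auto
      moreover have "Ws \<subseteq> {1..n}" unfolding Ws_def by blast
      ultimately show ?thesis using fin_inj[of Ws] by simp
    qed
    have type2: "\<exists>g\<in>G. \<exists>x. bl x = 1 \<and> f ` P i = insert x g"
      if i: "i \<in> {1..q}" and v: "v \<in> P i" and fv: "f v < \<tau>" for i v
    proof -
      have "(\<exists>b\<ge>1. \<forall>u\<in>f ` P i. bl u = b) \<or> (\<exists>g\<in>G. \<exists>x. bl x = 1 \<and> f ` P i = insert x g)"
        using red[OF i] unfolding c by simp
      moreover have "\<not> (\<exists>b\<ge>1. \<forall>u\<in>f ` P i. bl u = b)"
      proof
        assume "\<exists>b\<ge>1. \<forall>u\<in>f ` P i. bl u = b"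
        then obtain b where b1: "b \<ge> 1" and b2: "\<forall>u\<in>f ` P i. bl u = b" by blast
        have "bl (f v) = b" using b2 v by blast
        moreover have "bl (f v) = 0" using fv bl0 by simp
        ultimately show False using b1 by simp
      qed
      ultimately show ?thesis by blast
    qed
    have shared: "\<not> f (i * m + 1) < \<tau>" if i: "i \<in> {1..<q}" for i
    proof
      assume fs: "f (i * m + 1) < \<tau>"
      define s where "s = i * m + 1"
      have i1: "i \<in> {1..q}" and i2: "Suc i \<in> {1..q}" using i by simp_all
      have ige: "i \<ge> 1" using i by simp
      have E: "P i \<inter> P (Suc i) = {s}" using Pint[OF ige] unfolding s_def .
      have sP: "s \<in> P i" "s \<in> P (Suc i)" using E by blast+
      obtain g1 x1 where g1: "g1 \<in> G" "bl x1 = 1" "f ` P i = insert x1 g1"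
        using type2[OF i1 sP(1)] fs unfolding s_def by blast
      obtain g2 x2 where g2: "g2 \<in> G" "bl x2 = 1" "f ` P (Suc i) = insert x2 g2"
        using type2[OF i2 sP(2)] fs unfolding s_def by blast
      have bls: "bl (f s) = 0" using fs bl0 unfolding s_def by simp
      have "f s \<in> insert x1 g1" using g1(3) sP(1) by blast
      moreover have "f s \<noteq> x1" using bls g1(2) by auto
      ultimately have "f s \<in> g1" by blast
      have "f s \<in> insert x2 g2" using g2(3) sP(2) by blast
      moreover have "f s \<noteq> x2" using bls g2(2) by auto
      ultimately have "f s \<in> g2" by blast
      have fs2: "f s \<in> g2" by fact
      have C: "g1 \<inter> g2 \<subseteq> f ` P i \<inter> f ` P (Suc i)" using g1(3) g2(3) by auto
      have D: "f ` P i \<inter> f ` P (Suc i) = f ` (P i \<inter> P (Suc i))"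
        using inj_on_image_Int[OF inj Psub[OF i1] Psub[OF i2]] by simp
      have "g1 \<inter> g2 \<subseteq> {f s}" using C unfolding D E by simp
      then have int: "g1 \<inter> g2 = {f s}" using fs2 \<open>f s \<in> g1\<close> by blast
      have "card (g1 \<inter> g2) = 1" using int by simp
      then have "g1 = g2" using Gint g1(1) g2(1) by blast
      then have "g1 \<subseteq> {f s}" using int by blast
      then have "card g1 \<le> 1" using card_mono[of "{f s}" g1] by simp
      then show False using Gs(2)[OF g1(1)] k by simp
    qed
    have ends: "i = 1 \<or> i = q" if i: "i \<in> {1..q}" and v: "v \<in> P i" and fv: "f v < \<tau>" for i v
    proof (rule ccontr)
      assume "\<not> (i = 1 \<or> i = q)"
      then have ia: "i - 1 \<in> {1..<q}" and ib: "i \<in> {1..<q}" using i by auto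
      define a where "a = (i - 1) * m + 1"
      define b where "b = i * m + 1"
      have na: "\<not> f a < \<tau>" using shared[OF ia] unfolding a_def .
      have nb: "\<not> f b < \<tau>" using shared[OF ib] unfolding b_def .
      obtain g x where g: "g \<in> G" "bl x = 1" "f ` P i = insert x g" using type2[OF i v fv] by blast
      have aP: "a \<in> P i" and bP: "b \<in> P i" unfolding a_def b_def P_def using i by auto
      have "f a \<notin> g" using na Gs(1)[OF g(1)] by auto
      then have fa: "f a = x" using g(3) aP by blast
      have "f b \<notin> g" using nb Gs(1)[OF g(1)] by auto
      then have fb: "f b = x" using g(3) bP by blast
      have aN: "a \<in> {1..n}" and bN: "b \<in> {1..n}" using Psub[OF i] aP bP by blast+
      have "f a = f b" using fa fb by simp
      then have "a = b" using inj_onD[OF inj _ aN bN] by simp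
      moreover have "a \<noteq> b"
      proof -
        have "(i - 1) * m < i * m" using i m2 by simp
        then show ?thesis unfolding a_def b_def by simp
      qed
      ultimately show False by simp
    qed
    define T1 where "T1 = {v \<in> P 1. f v < \<tau>}"
    define Tq where "Tq = {v \<in> P q. f v < \<tau>}"
    have cTi: "card {v \<in> P i. f v < \<tau>} \<le> k - 1" if i: "i \<in> {1..q}" for i
    proof (cases "\<exists>v\<in>P i. f v < \<tau>")
      case False
      then have e0: "{v \<in> P i. f v < \<tau>} = {}" by blast
      show ?thesis unfolding e0 by simp
    next
      case True
      then obtain v where v: "v \<in> P i" "f v < \<tau>" by blast
      obtain g x where g: "g \<in> G" "bl x = 1" "f ` P i = insert x g" using type2[OF i v] by blast
      have "f ` {v \<in> P i. f v < \<tau>} \<subseteq> g"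
      proof
        fix y assume "y \<in> f ` {v \<in> P i. f v < \<tau>}"
        then obtain u where u: "u \<in> P i" "f u < \<tau>" "y = f u" by blast
        have "bl y = 0" using u bl0 by simp
        moreover have "y \<in> insert x g" using u g(3) by blast
        ultimately show "y \<in> g" using g(2) by auto
      qed
      moreover have "finite g"
      proof -
        have "card g > 0" using Gs(2)[OF g(1)] k by simp
        then show ?thesis by (rule card_ge_0_finite)
      qed
      ultimately have "card (f ` {v \<in> P i. f v < \<tau>}) \<le> card g" by (simp add: card_mono)
      moreover have "card (f ` {v \<in> P i. f v < \<tau>}) = card {v \<in> P i. f v < \<tau>}"
      proof -
        have "{v \<in> P i. f v < \<tau>} \<subseteq> {1..n}" using Psub[OF i] by blast
        then show ?thesis by (rule fin_inj)
      qed
      ultimately show ?thesis using Gs(2)[OF g(1)] by simp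
    qed
    have q1: "1 \<in> {1..q}" and qq: "q \<in> {1..q}" using q3 by auto
    have Tsub: "Ts \<subseteq> T1 \<union> Tq"
    proof
      fix v assume v: "v \<in> Ts"
      then have vr: "v \<in> {1..n}" and fv: "f v < \<tau>" unfolding Ts_def by auto
      obtain i where i: "i \<in> {1..q}" and vi: "v \<in> P i"
      proof (cases "v < n")
        case True
        then have "v \<in> {1..<n}" using vr by simp
        from adj[OF this] obtain i where "i \<in> {1..q}" "v \<in> P i" by blast
        then show ?thesis by (rule that)
      next
        case False
        then have "v = n" using vr by simp
        then have "v \<in> P q" unfolding P_def using nq by simp
        then show ?thesis using that qq by blast
      qed
      then have "i = 1 \<or> i = q" using ends fv by blast
      then show "v \<in> T1 \<union> Tq" using vi fv unfolding T1_def Tq_def by auto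
    qed
    have fT: "finite T1" "finite Tq" unfolding T1_def Tq_def P_def by auto
    have "card Ts \<le> card (T1 \<union> Tq)" using Tsub fT by (intro card_mono) auto
    also have "\<dots> \<le> card T1 + card Tq" by (rule card_Un_le)
    also have "\<dots> \<le> 2 * (k - 1)" using cTi[OF q1] cTi[OF qq] unfolding T1_def Tq_def by simp
    finally have cT: "card Ts \<le> 2 * (k - 1)" .
    have "{1..n} = Ts \<union> Ws" unfolding Ts_def Ws_def by auto
    then have "card {1..n} \<le> card Ts + card Ws" using card_Un_le[of Ts Ws] by simp
    then have "n \<le> card Ts + card Ws" by simp
    then show False using cT cW w n k by linarith
  qed
qed

lemma pigeon:
  fixes h :: "'b \<Rightarrow> nat"
  assumes fY: "finite Y" and hY: "\<forall>y\<in>Y. h y \<in> {1..p}" and cY: "card Y > p * r"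
  shows "\<exists>b\<in>{1..p}. card {y\<in>Y. h y = b} > r"
proof (rule ccontr)
  assume "\<not> (\<exists>b\<in>{1..p}. card {y\<in>Y. h y = b} > r)"
  then have le: "\<And>b. b \<in> {1..p} \<Longrightarrow> card {y\<in>Y. h y = b} \<le> r" by (simp add: not_less)
  have sub: "Y \<subseteq> (\<Union>b\<in>{1..p}. {y\<in>Y. h y = b})" using hY by blast
  have fU: "finite (\<Union>b\<in>{1..p}. {y\<in>Y. h y = b})" using fY by simp
  have "card Y \<le> card (\<Union>b\<in>{1..p}. {y\<in>Y. h y = b})" using card_mono[OF fU sub] .
  also have "\<dots> \<le> (\<Sum>b\<in>{1..p}. card {y\<in>Y. h y = b})" by (rule card_UN_le) simp
  also have "\<dots> \<le> of_nat (card {1..p}) * r" by (rule sum_bounded_above) (rule le)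
  also have "\<dots> = p * r" by simp
  finally show False using cY by simp
qed

lemma no_blue_H:
  fixes k \<chi> t n \<tau> w :: nat and A :: "nat \<Rightarrow> 'a set" and G :: "nat set set"
    and bl :: "nat \<Rightarrow> nat" and c :: "nat set \<Rightarrow> bool"
  assumes k: "k \<ge> 3" and chi: "\<chi> \<ge> 2" and n2: "n \<ge> 2"
    and finA: "\<forall>i\<in>{1..\<chi>}. finite (A i)"
    and disj: "\<forall>i\<in>{1..\<chi>}. \<forall>j\<in>{1..\<chi>}. i \<noteq> j \<longrightarrow> A i \<inter> A j = {}"
    and big: "\<forall>i\<in>{1..\<chi> - 1}. card (A i) > (\<chi> - 1) * (k - 2) + \<tau>"
    and cAt: "card (A \<chi>) = t"
    and G: "G \<subseteq> {e. e \<subseteq> {0..<\<tau>} \<and> card e = k - 1}"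
    and Gind: "\<forall>I. I \<subseteq> {0..<\<tau>} \<and> (\<forall>e\<in>G. \<not> e \<subseteq> I) \<longrightarrow> card I < t"
    and bl: "bl = (\<lambda>v. if v < \<tau> then 0 else if v < \<tau> + w then 1 else 2 + (v - \<tau> - w) div (n - 1))"
    and c: "c = (\<lambda>e. (\<exists>b\<ge>1. \<forall>v\<in>e. bl v = b) \<or> (\<exists>g\<in>G. \<exists>x. bl x = 1 \<and> e = insert x g))"
  shows "\<not> has_copy (\<Union>i\<in>{1..\<chi>}. A i)
              {e. e \<subseteq> (\<Union>i\<in>{1..\<chi>}. A i) \<and> card e = k \<and>
                  (\<exists>i\<in>{1..\<chi>}. card (e \<inter> A i) = k - 1)}
              {0..<\<tau> + w + (\<chi> - 2) * (n - 1)}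
              {e \<in> complete_kgraph_edges k (\<tau> + w + (\<chi> - 2) * (n - 1)). \<not> c e}"
proof
  define VH where "VH = (\<Union>i\<in>{1..\<chi>}. A i)"
  define EH where "EH = {e. e \<subseteq> VH \<and> card e = k \<and> (\<exists>i\<in>{1..\<chi>}. card (e \<inter> A i) = k - 1)}"
  define N where "N = \<tau> + w + (\<chi> - 2) * (n - 1)"
  assume "has_copy (\<Union>i\<in>{1..\<chi>}. A i)
              {e. e \<subseteq> (\<Union>i\<in>{1..\<chi>}. A i) \<and> card e = k \<and>
                  (\<exists>i\<in>{1..\<chi>}. card (e \<inter> A i) = k - 1)}
              {0..<\<tau> + w + (\<chi> - 2) * (n - 1)}
              {e \<in> complete_kgraph_edges k (\<tau> + w + (\<chi> - 2) * (n - 1)). \<not> c e}"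
  then have "has_copy VH EH {0..<N} {e \<in> complete_kgraph_edges k N. \<not> c e}"
    unfolding VH_def EH_def N_def .
  then obtain f where inj: "inj_on f VH" and fV: "f ` VH \<subseteq> {0..<N}"
    and blue0: "\<forall>e\<in>EH. f ` e \<in> {e \<in> complete_kgraph_edges k N. \<not> c e}"
    unfolding has_copy_def by blast
  have blue: "\<not> c (f ` e)" if e: "e \<in> EH" for e
  proof -
    have "f ` e \<in> {e \<in> complete_kgraph_edges k N. \<not> c e}" using blue0 e by (rule bspec)
    then show ?thesis by simp
  qed
  have bl0: "bl v = 0 \<longleftrightarrow> v < \<tau>" for v unfolding bl by simp
  have blN: "bl v \<le> \<chi> - 1" if v: "v < N" for v
  proof (cases "v < \<tau> + w")
    case True
    then have "bl v \<le> 1" unfolding bl by simp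
    then show ?thesis using chi by simp
  next
    case False
    have "v - \<tau> - w < (\<chi> - 2) * (n - 1)" using v False unfolding N_def by simp
    then have "(v - \<tau> - w) div (n - 1) < \<chi> - 2" by (rule less_mult_imp_div_less)
    then show ?thesis using False chi unfolding bl by simp
  qed
  have red1: "c e" if "\<forall>v\<in>e. bl v = b" "b \<ge> 1" for e b
    unfolding c using that by blast
  have AV: "A i \<subseteq> VH" if "i \<in> {1..\<chi>}" for i unfolding VH_def using that by blast
  have fVH: "finite VH" unfolding VH_def using finA by simp
  have EHI: "e \<in> EH" if "e \<subseteq> VH" "card e = k" "i \<in> {1..\<chi>}" "card (e \<inter> A i) = k - 1" for e i
    unfolding EH_def using that by blast
  have cinj: "card (f ` S) = card S" if "S \<subseteq> VH" for S
    using card_image[OF inj_on_subset[OF inj that]] .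
  have pick: "\<exists>b S. b \<in> {1..\<chi> - 1} \<and> S \<subseteq> A i \<and> card S = k - 1 \<and> (\<forall>v\<in>S. bl (f v) = b)"
    if i: "i \<in> {1..\<chi> - 1}" for i
  proof -
    have iX: "i \<in> {1..\<chi>}" using i by auto
    define Z where "Z = {a \<in> A i. bl (f a) = 0}"
    define Y where "Y = {a \<in> A i. bl (f a) \<noteq> 0}"
    have fAi: "finite (A i)" using finA iX by blast
    have fZ: "finite Z" and fY: "finite Y" unfolding Z_def Y_def using fAi by simp_all
    have ZV: "Z \<subseteq> VH" unfolding Z_def using AV[OF iX] by blast
    have "f ` Z \<subseteq> {0..<\<tau>}"
    proof
      fix y assume "y \<in> f ` Z"
      then obtain a where a: "a \<in> Z" "y = f a" by blast
      then have "bl (f a) = 0" unfolding Z_def by blast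
      then show "y \<in> {0..<\<tau>}" using bl0 a(2) by simp
    qed
    then have "card (f ` Z) \<le> \<tau>" using card_mono[of "{0..<\<tau>}" "f ` Z"] by simp
    then have cZ: "card Z \<le> \<tau>" using cinj[OF ZV] by simp
    have "A i = Y \<union> Z" unfolding Y_def Z_def by auto
    moreover have "Y \<inter> Z = {}" unfolding Y_def Z_def by auto
    ultimately have "card (A i) = card Y + card Z" using card_Un_disjoint[OF fY fZ] by simp
    moreover have "card (A i) > (\<chi> - 1) * (k - 2) + \<tau>" using big i by blast
    ultimately have cY: "card Y > (\<chi> - 1) * (k - 2)" using cZ by linarith
    have hY: "\<forall>y\<in>Y. bl (f y) \<in> {1..\<chi> - 1}"
    proof
      fix y assume y: "y \<in> Y"
      then have "y \<in> VH" unfolding Y_def using AV[OF iX] by blast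
      then have "f y < N" using fV by auto
      then have "bl (f y) \<le> \<chi> - 1" by (rule blN)
      moreover have "bl (f y) \<noteq> 0" using y unfolding Y_def by simp
      ultimately show "bl (f y) \<in> {1..\<chi> - 1}" by simp
    qed
    obtain b where b: "b \<in> {1..\<chi> - 1}" and cb: "card {y\<in>Y. bl (f y) = b} > k - 2"
      using pigeon[OF fY hY cY] by blast
    have kc: "k - 1 \<le> card {y\<in>Y. bl (f y) = b}" using cb k by simp
    obtain S where S: "S \<subseteq> {y\<in>Y. bl (f y) = b}" "card S = k - 1"
      using obtain_subset_with_card_n[OF kc] by blast
    have "S \<subseteq> A i" using S(1) unfolding Y_def by blast
    moreover have "\<forall>v\<in>S. bl (f v) = b" using S(1) by blast
    ultimately show ?thesis using b S(2) by blast
  qed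
  have "\<forall>i\<in>{1..\<chi> - 1}. \<exists>b. \<exists>S. b \<in> {1..\<chi> - 1} \<and> S \<subseteq> A i \<and> card S = k - 1 \<and> (\<forall>v\<in>S. bl (f v) = b)"
    using pick by blast
  from bchoice[OF this] obtain \<beta> where h\<beta>: "\<forall>i\<in>{1..\<chi> - 1}. \<exists>S. \<beta> i \<in> {1..\<chi> - 1} \<and> S \<subseteq> A i \<and> card S = k - 1 \<and> (\<forall>v\<in>S. bl (f v) = \<beta> i)"
    by blast
  from bchoice[OF h\<beta>] obtain S where hS: "\<forall>i\<in>{1..\<chi> - 1}. \<beta> i \<in> {1..\<chi> - 1} \<and> S i \<subseteq> A i \<and> card (S i) = k - 1 \<and> (\<forall>v\<in>S i. bl (f v) = \<beta> i)"
    by blast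
  have \<beta>S: "\<beta> i \<in> {1..\<chi> - 1} \<and> S i \<subseteq> A i \<and> card (S i) = k - 1 \<and> (\<forall>v\<in>S i. bl (f v) = \<beta> i)"
    if "i \<in> {1..\<chi> - 1}" for i using hS that by (rule bspec)
  have Sne: "S i \<noteq> {}" if "i \<in> {1..\<chi> - 1}" for i
    using \<beta>S[OF that] k by auto
  have key: "bl (f u) \<noteq> \<beta> i" if i: "i \<in> {1..\<chi> - 1}" and u: "u \<in> VH" and uA: "u \<notin> A i" for i u
  proof
    assume eq: "bl (f u) = \<beta> i"
    have iX: "i \<in> {1..\<chi>}" using i by auto
    have Si: "S i \<subseteq> A i" "card (S i) = k - 1" "\<forall>v\<in>S i. bl (f v) = \<beta> i" "\<beta> i \<in> {1..\<chi> - 1}"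
      using \<beta>S[OF i] by auto
    have "card (S i) > 0" using Si(2) k by simp
    then have fS: "finite (S i)" by (rule card_ge_0_finite)
    have uS: "u \<notin> S i" using uA Si(1) by blast
    define e where "e = insert u (S i)"
    have ce: "card e = k" unfolding e_def using fS uS Si(2) k by simp
    have eV: "e \<subseteq> VH" unfolding e_def using u Si(1) AV[OF iX] by blast
    have eA: "e \<inter> A i = S i" unfolding e_def using uA Si(1) by blast
    have "e \<in> EH" using EHI[OF eV ce iX] eA Si(2) by simp
    then have nc: "\<not> c (f ` e)" by (rule blue)
    have "\<forall>v\<in>f ` e. bl v = \<beta> i" unfolding e_def using eq Si(3) by auto
    moreover have "\<beta> i \<ge> 1" using Si(4) by simp
    ultimately have "c (f ` e)" by (rule red1)
    then show False using nc by simp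
  qed
  have injb: "inj_on \<beta> {1..\<chi> - 1}"
  proof (rule inj_onI)
    fix i j assume i: "i \<in> {1..\<chi> - 1}" and j: "j \<in> {1..\<chi> - 1}" and eq: "\<beta> i = \<beta> j"
    show "i = j"
    proof (rule ccontr)
      assume ne: "i \<noteq> j"
      obtain u where u: "u \<in> S j" using Sne[OF j] by blast
      have uAj: "u \<in> A j" using \<beta>S[OF j] u by blast
      have jX: "j \<in> {1..\<chi>}" and iX: "i \<in> {1..\<chi>}" using i j by auto
      have uV: "u \<in> VH" using AV[OF jX] uAj by blast
      have "A i \<inter> A j = {}" using disj iX jX ne by blast
      then have uAi: "u \<notin> A i" using uAj by blast
      have "bl (f u) = \<beta> j" using \<beta>S[OF j] u by blast
      then show False using key[OF i uV uAi] eq by simp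
    qed
  qed
  have surjb: "\<beta> ` {1..\<chi> - 1} = {1..\<chi> - 1}"
  proof (rule endo_inj_surj)
    show "finite {1..\<chi> - 1}" by simp
    show "\<beta> ` {1..\<chi> - 1} \<subseteq> {1..\<chi> - 1}" using \<beta>S by blast
    show "inj_on \<beta> {1..\<chi> - 1}" by (rule injb)
  qed
  have chiX: "\<chi> \<in> {1..\<chi>}" using chi by simp
  have AT: "f u < \<tau>" if u: "u \<in> A \<chi>" for u
  proof (rule ccontr)
    assume nt: "\<not> f u < \<tau>"
    have uV: "u \<in> VH" using AV[OF chiX] u by blast
    then have "f u < N" using fV by auto
    then have "bl (f u) \<le> \<chi> - 1" by (rule blN)
    moreover have "bl (f u) \<noteq> 0" using nt bl0 by simp
    ultimately have "bl (f u) \<in> {1..\<chi> - 1}" by simp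
    then have "bl (f u) \<in> \<beta> ` {1..\<chi> - 1}" using surjb by simp
    then obtain i where i: "i \<in> {1..\<chi> - 1}" and bi: "\<beta> i = bl (f u)" by (auto elim!: imageE)
    have iX: "i \<in> {1..\<chi>}" and ine: "i \<noteq> \<chi>" using i chi by auto
    have "A i \<inter> A \<chi> = {}" using disj iX chiX ine by blast
    then have "u \<notin> A i" using u by blast
    then show False using key[OF i uV] bi by simp
  qed
  define I where "I = f ` A \<chi>"
  have IT: "I \<subseteq> {0..<\<tau>}" unfolding I_def using AT by auto
  have AchiV: "A \<chi> \<subseteq> VH" using AV[OF chiX] .
  have cI: "card I = t" unfolding I_def using cinj[OF AchiV] cAt by simp
  have "\<not> (\<forall>e\<in>G. \<not> e \<subseteq> I)"
  proof
    assume "\<forall>e\<in>G. \<not> e \<subseteq> I"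
    then have "card I < t" using Gind IT by blast
    then show False using cI by simp
  qed
  then obtain g where g: "g \<in> G" and gI: "g \<subseteq> I" by blast
  have cg: "card g = k - 1" using G g by blast
  have one: "1 \<in> {1..\<chi> - 1}" using chi by simp
  then have "1 \<in> \<beta> ` {1..\<chi> - 1}" using surjb by simp
  then obtain i0 where i0: "i0 \<in> {1..\<chi> - 1}" and b0: "\<beta> i0 = 1" by (auto elim!: imageE)
  obtain u0 where u0: "u0 \<in> S i0" using Sne[OF i0] by blast
  have u0A: "u0 \<in> A i0" and blu0: "bl (f u0) = 1" using \<beta>S[OF i0] u0 b0 by auto
  have i0X: "i0 \<in> {1..\<chi>}" and i0ne: "i0 \<noteq> \<chi>" using i0 chi by auto
  have "A i0 \<inter> A \<chi> = {}" using disj i0X chiX i0ne by blast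
  then have u0nA: "u0 \<notin> A \<chi>" using u0A by blast
  have u0V: "u0 \<in> VH" using AV[OF i0X] u0A by blast
  define D where "D = {a \<in> A \<chi>. f a \<in> g}"
  have DA: "D \<subseteq> A \<chi>" unfolding D_def by blast
  have fD: "f ` D = g" unfolding D_def using gI unfolding I_def by blast
  have DV: "D \<subseteq> VH" using DA AchiV by blast
  have cD: "card D = k - 1" using cinj[OF DV] fD cg by simp
  have "finite (A \<chi>)" using finA chiX by blast
  then have finD: "finite D" using finite_subset[OF DA] by simp
  have u0D: "u0 \<notin> D" using u0nA DA by blast
  define e where "e = insert u0 D"
  have ce: "card e = k" unfolding e_def using finD u0D cD k by simp
  have eV: "e \<subseteq> VH" unfolding e_def using u0V DV by blast
  have eA: "e \<inter> A \<chi> = D" unfolding e_def using u0nA DA by blast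
  have "e \<in> EH" using EHI[OF eV ce chiX] eA cD by simp
  then have nc: "\<not> c (f ` e)" by (rule blue)
  have fe: "f ` e = insert (f u0) g" unfolding e_def using fD by simp
  have "c (f ` e)" unfolding c fe using g blu0 by blast
  then show False using nc by simp
qed

theorem proposition1p8:
  fixes k \<chi> t n :: nat and A :: "nat \<Rightarrow> 'a set"
  assumes "k \<ge> 3" and "\<chi> \<ge> 2" and "t \<ge> k - 1" and "n \<ge> 3 * (k - 1)"
    and "n mod (k - 1) = 1 mod (k - 1)"
    and "\<forall>i\<in>{1..\<chi>}. finite (A i)"
    and "\<forall>i\<in>{1..\<chi>}. \<forall>j\<in>{1..\<chi>}. i \<noteq> j \<longrightarrow> A i \<inter> A j = {}"
    and "\<forall>i\<in>{1..\<chi> - 1}. card (A i) > (\<chi> - 1) * (k - 2) + tau (k - 1) t"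
    and "card (A \<chi>) = t"
  shows "int (ramsey_number k (loose_path_vertices n) (loose_path_edges k n)
              (\<Union>i\<in>{1..\<chi>}. A i)
              {e. e \<subseteq> (\<Union>i\<in>{1..\<chi>}. A i) \<and> card e = k \<and>
                  (\<exists>i\<in>{1..\<chi>}. card (e \<inter> A i) = k - 1)})
         \<ge> int (\<chi> - 1) * (int n - 1) + int (tau (k - 1) t) - 2 * int k + 3"
proof -
  note k = assms(1) and chi = assms(2) and tk = assms(3) and nk = assms(4) and nmod = assms(5)
    and finA = assms(6) and disj = assms(7) and big = assms(8) and cAt = assms(9)
  define VH where "VH = (\<Union>i\<in>{1..\<chi>}. A i)"
  define EH where "EH = {e. e \<subseteq> VH \<and> card e = k \<and> (\<exists>i\<in>{1..\<chi>}. card (e \<inter> A i) = k - 1)}"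
  define \<tau> where "\<tau> = tau (k - 1) t"
  define w where "w = n - 2 * k + 1"
  define Nt where "Nt = \<tau> + w + (\<chi> - 2) * (n - 1)"
  have k2: "k - 1 \<ge> 2" using k by simp
  have t1: "t \<ge> 1" using tk k by simp
  obtain G :: "nat set set" where G: "G \<subseteq> {e. e \<subseteq> {0..<\<tau>} \<and> card e = k - 1}"
    and Gind: "\<forall>I. I \<subseteq> {0..<\<tau>} \<and> (\<forall>e\<in>G. \<not> e \<subseteq> I) \<longrightarrow> card I < t"
    and Gint: "\<forall>e\<in>G. \<forall>e'\<in>G. e \<noteq> e' \<longrightarrow> card (e \<inter> e') \<noteq> 1"
    using tau_props[OF k2 t1] unfolding \<tau>_def by blast
  define bl where "bl = (\<lambda>v. if v < \<tau> then 0 else if v < \<tau> + w then 1 else 2 + (v - \<tau> - w) div (n - 1))"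
  define c where "c = (\<lambda>e. (\<exists>b\<ge>1. \<forall>v\<in>e. bl v = b) \<or> (\<exists>g\<in>G. \<exists>x. bl x = 1 \<and> e = insert x g))"
  have noR: "\<not> has_copy (loose_path_vertices n) (loose_path_edges k n) {0..<Nt}
            {e \<in> complete_kgraph_edges k Nt. c e}"
    by (rule no_red_path[OF k nk nmod w_def G Gint bl_def c_def])
  have n2: "n \<ge> 2" using nk k by simp
  have big': "\<forall>i\<in>{1..\<chi> - 1}. card (A i) > (\<chi> - 1) * (k - 2) + \<tau>" using big unfolding \<tau>_def .
  have noB: "\<not> has_copy VH EH {0..<Nt} {e \<in> complete_kgraph_edges k Nt. \<not> c e}"
    using no_blue_H[OF k chi n2 finA disj big' cAt G Gind bl_def c_def]
    unfolding VH_def EH_def Nt_def .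
  define Q where "Q = (\<lambda>N. \<forall>c :: nat set \<Rightarrow> bool.
        has_copy (loose_path_vertices n) (loose_path_edges k n) {0..<N} {e \<in> complete_kgraph_edges k N. c e} \<or>
        has_copy VH EH {0..<N} {e \<in> complete_kgraph_edges k N. \<not> c e})"
  have kk: "k \<ge> 2" using k by simp
  have fVH: "finite VH" unfolding VH_def using finA by simp
  have EHe: "\<forall>e\<in>EH. e \<subseteq> VH \<and> card e = k" unfolding EH_def by blast
  have ex: "\<exists>N. Q N" unfolding Q_def by (rule ramsey_exists[OF kk fVH EHe])
  have notQ: "\<not> Q N" if N: "N \<le> Nt" for N
  proof
    assume "Q N"
    then have D: "has_copy (loose_path_vertices n) (loose_path_edges k n) {0..<N} {e \<in> complete_kgraph_edges k N. c e} \<or>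
        has_copy VH EH {0..<N} {e \<in> complete_kgraph_edges k N. \<not> c e}" unfolding Q_def by (rule spec)
    have W: "{0..<N} \<subseteq> {0..<Nt}" using N by auto
    have C: "complete_kgraph_edges k N \<subseteq> complete_kgraph_edges k Nt" using N by (rule complete_mono)
    have F1: "{e \<in> complete_kgraph_edges k N. c e} \<subseteq> {e \<in> complete_kgraph_edges k Nt. c e}" using C by blast
    have F2: "{e \<in> complete_kgraph_edges k N. \<not> c e} \<subseteq> {e \<in> complete_kgraph_edges k Nt. \<not> c e}" using C by blast
    from D show False
    proof
      assume h: "has_copy (loose_path_vertices n) (loose_path_edges k n) {0..<N} {e \<in> complete_kgraph_edges k N. c e}"
      show False using has_copy_mono[OF h W F1] noR by simp
    next
      assume h: "has_copy VH EH {0..<N} {e \<in> complete_kgraph_edges k N. \<not> c e}"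
      show False using has_copy_mono[OF h W F2] noB by simp
    qed
  qed
  have RQ: "ramsey_number k (loose_path_vertices n) (loose_path_edges k n)
              (\<Union>i\<in>{1..\<chi>}. A i)
              {e. e \<subseteq> (\<Union>i\<in>{1..\<chi>}. A i) \<and> card e = k \<and>
                  (\<exists>i\<in>{1..\<chi>}. card (e \<inter> A i) = k - 1)} = Least Q"
    unfolding ramsey_number_def Q_def VH_def EH_def ..
  have QL: "Q (Least Q)" using ex by (rule LeastI_ex)
  have gt: "Least Q > Nt"
  proof (rule ccontr)
    assume "\<not> Least Q > Nt"
    then have "Least Q \<le> Nt" by simp
    then show False using notQ QL by blast
  qed
  have n2k: "2 * k \<le> n" using nk k by simp
  have wi: "int w = int n - 2 * int k + 1" unfolding w_def using n2k by (simp add: of_nat_diff)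
  have c2: "int (\<chi> - 2) = int \<chi> - 2" using chi by (simp add: of_nat_diff)
  have c1: "int (\<chi> - 1) = int \<chi> - 1" using chi by (simp add: of_nat_diff)
  have n1: "int (n - 1) = int n - 1" using n2 by (simp add: of_nat_diff)
  have "int Nt = int \<tau> + int w + int (\<chi> - 2) * int (n - 1)" unfolding Nt_def by simp
  also have "\<dots> = int \<tau> + (int n - 2 * int k + 1) + (int \<chi> - 2) * (int n - 1)" using wi c2 n1 by simp
  finally have Nti: "int Nt = int \<tau> + (int n - 2 * int k + 1) + (int \<chi> - 2) * (int n - 1)" .
  have "int (Least Q) \<ge> int Nt + 1" using gt by simp
  then have "int (Least Q) \<ge> int (\<chi> - 1) * (int n - 1) + int \<tau> - 2 * int k + 3"
    using Nti c1 by (simp add: algebra_simps)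
  then show ?thesis using RQ unfolding \<tau>_def by simp
qed

end
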